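(* Let $R\ge1$, $\Gamma\ge1$, $1\le s\le n_2$, $\gamma>0$, $c\ge1$. Let $\hat X=\sum_{r=1}^R\hat u^r(\hat v^r)^T$ have rank $R$, with $\|\hat v^r\|_1\le\sqrt s\|\hat v^r\|_2$ for all $r$ and $\sum_r\|\hat u^r\|_2^2\|\hat v^r\|_2^2\le\Gamma^2$, and let $c_{\hat U}>0$ satisfy $\sum_{r=1}^R(\|\hat u^r\|_2\|\hat v^r\|_2)^{2/3}\le c_{\hat U}R^{2/3}\|\hat X\|_{2/3}^{2/3}$. Let $\eta\in\mathbb{R}^m\setminus\{0\}$, $y=\mathcal{A}(\hat X)+\eta$, and set $\alpha=\beta=\|\eta\|_2^2/\|\hat X\|_{2/3}^{2/3}$, assumed $<1$. Assume $\mathcal{A}$ has the additive rank-$2R$ effectively $\big(n_1,\max\{s,\gamma^2(\|\hat X\|_{2/3}^{2/3}/\|\eta\|_2^2)^2\}\big)$-sparse RIP$_{(c+1)\Gamma}$ with constant $0<\delta<1$. Then for any global minimizer $(u^1_{\alpha,\beta},\dots,v^R_{\alpha,\beta})$ of $J^R_{\alpha,\beta}$ with $\|\sigma_{\alpha,\beta}\|_2\le c\Gamma$ (where $(\sigma_{\alpha,\beta})_r=\|u^r_{\alpha,\beta}\|_2\|v^r_{\alpha,\beta}\|_2$) and $\|v^r_{\alpha,\beta}\|_2\ge(\|\hat X\|_F+\|\eta\|_2+\sqrt\delta)^2/\gamma$ for all $r\in[R]$, $$\|\hat X-X_{\alpha,\beta}\|_F\le\left(2\sqrt{c_{\hat U}R^{2/3}s^{1/3}}+2\right)\|\eta\|_2+\sqrt\delta,$$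 where $X_{\alpha,\beta}=\sum_{r=1}^Ru^r_{\alpha,\beta}(v^r_{\alpha,\beta})^T$.
   Context: $J^R_{\alpha,\beta}(u^1,\dots,u^R,v^1,\dots,v^R)=\|y-\mathcal{A}(\sum_{r=1}^Ru^r(v^r)^T)\|_2^2+\alpha\sum_r\|u^r\|_2^2+\beta\sum_r\|v^r\|_1$, with $\mathcal{A}:\mathbb{R}^{n_1\times n_2}\to\mathbb{R}^m$ linear. $\|Z\|_p$ is the Schatten-$p$ (quasi-)norm (the $\ell_p$ quasi-norm of the singular values). For $n\ge1,s>0$: $K_{n,s}=\{z\in\mathbb{R}^n:\|z\|_2\le1,\|z\|_1\le\sqrt s\}$. $K^{R,\Gamma}_{s_1,s_2}$ is the set of $Z=\sum_{r=1}^R\sigma_ru^r(v^r)^T$ with $u^r\in K_{n_1,s_1}$, $v^r\in K_{n_2,s_2}$, $\|u^r\|_2=\|v^r\|_2=1$, $\|\sigma\|_2\le\Gamma$. $\mathcal{A}$ has the additive rank-$R$ effectively $(s_1,s_2)$-sparse RIP$_\Gamma$ with constant $\delta$ if $|\|\mathcal{A}(Z)\|_2^2-\|Z\|_F^2|\le\delta$ for all $Z\in K^{R,\Gamma}_{s_1,s_2}$. *)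

theory Defs
  imports Jordan_Normal_Form.DL_Rank Jordan_Normal_Form.Char_Poly
    "HOL-Computational_Algebra.Polynomial"
begin

definition norm2 :: "real vec \<Rightarrow> real" where
  "norm2 x = sqrt (\<Sum>i<dim_vec x. (x $ i)^2)"

definition norm1 :: "real vec \<Rightarrow> real" where
  "norm1 x = (\<Sum>i<dim_vec x. \<bar>x $ i\<bar>)"

definition frob :: "real mat \<Rightarrow> real" where
  "frob Z = sqrt (\<Sum>i<dim_row Z. \<Sum>j<dim_col Z. (Z $$ (i,j))^2)"

definition sing_vals :: "real mat \<Rightarrow> real multiset" where
  "sing_vals Z = image_mset sqrt (proots (char_poly (transpose_mat Z * Z)))"

definition schatten :: "real \<Rightarrow> real mat \<Rightarrow> real" where
  "schatten p Z = (\<Sum>\<sigma>\<in>#sing_vals Z. \<sigma> powr p) powr (1/p)"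

definition mrank :: "real mat \<Rightarrow> nat" where
  "mrank Z = vec_space.rank (dim_row Z) (Z :: real mat)"

definition factor_mat :: "nat \<Rightarrow> nat \<Rightarrow> nat \<Rightarrow> (nat \<Rightarrow> real vec) \<Rightarrow> (nat \<Rightarrow> real vec) \<Rightarrow> real mat" where
  "factor_mat n1 n2 R u v = mat n1 n2 (\<lambda>(i,j). \<Sum>r<R. (u r $ i) * (v r $ j))"

definition lin_meas :: "nat \<Rightarrow> nat \<Rightarrow> nat \<Rightarrow> (real mat \<Rightarrow> real vec) \<Rightarrow> bool" where
  "lin_meas n1 n2 m A \<longleftrightarrow>
     (\<forall>Z \<in> carrier_mat n1 n2. A Z \<in> carrier_vec m) \<and>
     (\<forall>Z \<in> carrier_mat n1 n2. \<forall>W \<in> carrier_mat n1 n2. A (Z + W) = A Z + A W) \<and>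
     (\<forall>Z \<in> carrier_mat n1 n2. \<forall>a. A (a \<cdot>\<^sub>m Z) = a \<cdot>\<^sub>v A Z)"

definition J_fun :: "nat \<Rightarrow> nat \<Rightarrow> (real mat \<Rightarrow> real vec) \<Rightarrow> real vec \<Rightarrow> nat \<Rightarrow> real \<Rightarrow> real
    \<Rightarrow> (nat \<Rightarrow> real vec) \<Rightarrow> (nat \<Rightarrow> real vec) \<Rightarrow> real" where
  "J_fun n1 n2 A y R \<alpha> \<beta> u v =
     (norm2 (y - A (factor_mat n1 n2 R u v)))^2
     + \<alpha> * (\<Sum>r<R. (norm2 (u r))^2) + \<beta> * (\<Sum>r<R. norm1 (v r))"

definition K_set :: "nat \<Rightarrow> real \<Rightarrow> real vec set" where
  "K_set n s = {z \<in> carrier_vec n. norm2 z \<le> 1 \<and> norm1 z \<le> sqrt s}"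

definition K_RG :: "nat \<Rightarrow> nat \<Rightarrow> nat \<Rightarrow> real \<Rightarrow> real \<Rightarrow> real \<Rightarrow> real mat set" where
  "K_RG n1 n2 R \<Gamma> s1 s2 =
     {mat n1 n2 (\<lambda>(i,j). \<Sum>r<R. \<sigma> r * (u r $ i) * (v r $ j)) | \<sigma> u v.
        (\<forall>r<R. u r \<in> K_set n1 s1 \<and> v r \<in> K_set n2 s2 \<and> norm2 (u r) = 1 \<and> norm2 (v r) = 1)
        \<and> sqrt (\<Sum>r<R. (\<sigma> r)^2) \<le> \<Gamma>}"

definition sparse_RIP :: "nat \<Rightarrow> nat \<Rightarrow> (real mat \<Rightarrow> real vec) \<Rightarrow> nat \<Rightarrow> real \<Rightarrow> real \<Rightarrow> real \<Rightarrow> real \<Rightarrow> bool" where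
  "sparse_RIP n1 n2 A R s1 s2 \<Gamma> \<delta> \<longleftrightarrow>
     (\<forall>Z \<in> K_RG n1 n2 R \<Gamma> s1 s2. \<bar>(norm2 (A Z))^2 - (frob Z)^2\<bar> \<le> \<delta>)"

end

theory Submission imports Defs "HOL-Analysis.L2_Norm" begin

lemma norm2_L2: "norm2 x = L2_set (\<lambda>i. x $ i) {..<dim_vec x}"
  unfolding norm2_def L2_set_def by simp

lemma norm2_nonneg[simp]: "0 \<le> norm2 x"
  unfolding norm2_def by (simp add: sum_nonneg)

lemma norm1_nonneg[simp]: "0 \<le> norm1 x"
  unfolding norm1_def by (simp add: sum_nonneg)

lemma norm2_le_norm1: "norm2 x \<le> norm1 x"
  unfolding norm2_L2 norm1_def by (rule L2_set_le_sum_abs)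

lemma norm1_le_sqrt_norm2: "norm1 x \<le> sqrt (real (dim_vec x)) * norm2 x"
proof -
  have "norm1 x = (\<Sum>i<dim_vec x. \<bar>x $ i\<bar> * \<bar>1::real\<bar>)" unfolding norm1_def by simp
  also have "\<dots> \<le> L2_set (\<lambda>i. x $ i) {..<dim_vec x} * L2_set (\<lambda>i. 1::real) {..<dim_vec x}"
    by (rule L2_set_mult_ineq)
  also have "\<dots> = sqrt (real (dim_vec x)) * norm2 x"
    unfolding norm2_L2 L2_set_constant by simp
  finally show ?thesis .
qed

lemma L2_tri: "(\<And>i. i \<in> A \<Longrightarrow> f i = g i + h i) \<Longrightarrow> L2_set f A \<le> L2_set g A + L2_set h A"
proof -
  assume "\<And>i. i \<in> A \<Longrightarrow> f i = g i + h i"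
  then have "L2_set f A = L2_set (\<lambda>i. g i + h i) A" by (rule L2_set_cong[OF refl])
  then show ?thesis using L2_set_triangle_ineq by simp
qed

lemma norm2_tri:
  assumes "dim_vec a = n" "dim_vec b = n" "dim_vec c = n" "\<And>i. i < n \<Longrightarrow> a $ i = b $ i + c $ i"
  shows "norm2 a \<le> norm2 b + norm2 c"
  unfolding norm2_L2 using assms by (auto intro!: L2_tri)

lemma norm2_smult[simp]: "norm2 (k \<cdot>\<^sub>v x) = \<bar>k\<bar> * norm2 x"
proof -
  have "norm2 (k \<cdot>\<^sub>v x) = sqrt (k^2 * (\<Sum>i<dim_vec x. (x $ i)^2))"
    unfolding norm2_def by (simp add: power_mult_distrib sum_distrib_left)
  then show ?thesis unfolding norm2_def by (simp add: real_sqrt_mult)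
qed

lemma norm1_smult[simp]: "norm1 (k \<cdot>\<^sub>v x) = \<bar>k\<bar> * norm1 x"
  unfolding norm1_def by (simp add: abs_mult sum_distrib_left)

lemma norm2_zero_comp: "norm2 x = 0 \<Longrightarrow> i < dim_vec x \<Longrightarrow> x $ i = 0"
  unfolding norm2_L2 using L2_set_eq_0_iff[of "{..<dim_vec x}"] by auto

lemma norm2_0v[simp]: "norm2 (0\<^sub>v n) = 0" unfolding norm2_def by simp
lemma norm1_0v[simp]: "norm1 (0\<^sub>v n) = 0" unfolding norm1_def by simp


lemma norm2_unit: "0 < n \<Longrightarrow> norm2 (unit_vec n 0) = 1"
  unfolding norm2_def by (simp add: sum.remove[of _ 0] power2_eq_square)

lemma norm1_unit: "0 < n \<Longrightarrow> norm1 (unit_vec n 0) = 1"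
  unfolding norm1_def by (simp add: sum.remove[of _ 0])

lemma sum_2R: "(\<Sum>r<2*(R::nat). f r) = (\<Sum>r<R. f r) + (\<Sum>r<R. f (r + R)::'a::comm_monoid_add)"
proof -
  have "{..<2*R} = {..<R} \<union> {R..<R+R}" by auto
  then have "(\<Sum>r<2*R. f r) = (\<Sum>r<R. f r) + (\<Sum>r\<in>{R..<R+R}. f r)"
    by (simp add: sum.union_disjoint ivl_disj_int)
  also have "(\<Sum>r\<in>{R..<R+R}. f r) = (\<Sum>r<R. f (r + R))"
    using sum.shift_bounds_nat_ivl[of f 0 R R] by (simp add: lessThan_atLeast0)
  finally show ?thesis .
qed

lemma unit_K: assumes "0 < n" "1 \<le> s" shows "unit_vec n 0 \<in> K_set n s" "norm2 (unit_vec n 0) = 1"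
  using assms norm2_unit[of n] norm1_unit[of n] unfolding K_set_def by auto

lemma factor_KRG:
  assumes n1: "0 < n1" and n2: "0 < n2" and s2: "1 \<le> s2"
  and p: "\<forall>r<N. p r \<in> carrier_vec n1" and q: "\<forall>r<N. q r \<in> carrier_vec n2"
  and qs: "\<forall>r<N. norm1 (q r) \<le> sqrt s2 * norm2 (q r)"
  and G: "sqrt (\<Sum>r<N. (norm2 (p r) * norm2 (q r))^2) \<le> G"
  shows "mat n1 n2 (\<lambda>(i,j). \<Sum>r<N. p r $ i * q r $ j) \<in> K_RG n1 n2 N G (real n1) s2"
proof -
  define z where "z r = (norm2 (p r) = 0 \<or> norm2 (q r) = 0)" for r
  define \<sigma> where "\<sigma> r = norm2 (p r) * norm2 (q r)" for r
  define u' where "u' r = (if z r then unit_vec n1 0 else (1/norm2 (p r)) \<cdot>\<^sub>v p r)" for r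
  define v' where "v' r = (if z r then unit_vec n2 0 else (1/norm2 (q r)) \<cdot>\<^sub>v q r)" for r
  have ent: "\<sigma> r * (u' r $ i) * (v' r $ j) = p r $ i * q r $ j" if "r < N" "i < n1" "j < n2" for r i j
  proof (cases "z r")
    case True
    then have "p r $ i * q r $ j = 0" using norm2_zero_comp[of "p r" i] norm2_zero_comp[of "q r" j]
      p q that z_def by auto
    then show ?thesis using True unfolding \<sigma>_def z_def by auto
  next
    case False
    have d: "i < dim_vec (p r)" "j < dim_vec (q r)" using p q that by auto
    show ?thesis using False d unfolding \<sigma>_def u'_def v'_def z_def by auto
  qed
  have conds: "u' r \<in> K_set n1 (real n1) \<and> v' r \<in> K_set n2 s2 \<and> norm2 (u' r) = 1 \<and> norm2 (v' r) = 1"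
    if "r < N" for r
  proof (cases "z r")
    case True
    then show ?thesis unfolding u'_def v'_def using unit_K[OF n1, of "real n1"] unit_K[OF n2 s2] n1 by auto
  next
    case False
    have pn: "norm2 (p r) > 0" "norm2 (q r) > 0" using False z_def norm2_nonneg
      by (metis less_eq_real_def)+
    have c1: "u' r \<in> carrier_vec n1" "v' r \<in> carrier_vec n2" using False p q that
      unfolding u'_def v'_def by auto
    have "norm2 (u' r) = 1" "norm2 (v' r) = 1" using False pn unfolding u'_def v'_def by auto
    moreover have "norm1 (u' r) \<le> sqrt (real n1)"
      using norm1_le_sqrt_norm2[of "u' r"] c1 \<open>norm2 (u' r) = 1\<close> by auto
    moreover have "norm1 (v' r) \<le> sqrt s2"
    proof -
      have "norm1 (v' r) = norm1 (q r) / norm2 (q r)" using False pn unfolding v'_def by auto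
      also have "\<dots> \<le> sqrt s2" using qs that pn by (simp add: divide_le_eq)
      finally show ?thesis .
    qed
    ultimately show ?thesis using c1 unfolding K_set_def by auto
  qed
  have meq: "mat n1 n2 (\<lambda>(i,j). \<Sum>r<N. p r $ i * q r $ j)
          = mat n1 n2 (\<lambda>(i,j). \<Sum>r<N. \<sigma> r * (u' r $ i) * (v' r $ j))"
    by (rule cong_mat) (auto intro!: sum.cong simp: ent)
  have "sqrt (\<Sum>r<N. (\<sigma> r)^2) \<le> G" using G unfolding \<sigma>_def .
  then show ?thesis unfolding K_RG_def using meq conds by blast
qed

lemma balance:
  fixes a b c2 s :: real
  assumes a: "a > 0" and b: "b > 0" and bc: "b \<le> sqrt s * c2" and s: "s > 0" and c2: "c2 \<ge> 0"
  defines "t \<equiv> (a*b) powr (1/3) / a"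
  shows "t > 0" "t^2 * a^2 + b / t \<le> 2 * (s powr (1/3) * (a*c2) powr (2/3))"
proof -
  define g where "g = (a*b) powr (1/3)"
  have g: "g > 0" using a b unfolding g_def by simp
  have g3: "g^3 = a*b"
  proof -
    have "g^3 = g powr 3" using g by (simp add: powr_realpow)
    also have "\<dots> = a*b" unfolding g_def using a b by (simp add: powr_powr)
    finally show ?thesis .
  qed
  have g2: "g^2 = (a*b) powr (2/3)"
  proof -
    have "g^2 = g powr 2" using g by (simp add: powr_realpow)
    also have "\<dots> = (a*b) powr (2/3)" unfolding g_def using a b by (simp add: powr_powr)
    finally show ?thesis .
  qed
  have tt: "t = g / a" unfolding t_def g_def ..
  show "t > 0" using g a tt by simp
  have e1: "t^2 * a^2 = g^2" using a tt by (simp add: power_divide)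
  have e2: "b / t = g^2"
  proof -
    have "b / t = a * b / g" using tt a g by simp
    also have "\<dots> = g^3 / g" using g3 by simp
    also have "\<dots> = g^2" using g by (simp add: power3_eq_cube power2_eq_square)
    finally show ?thesis .
  qed
  have "(a*b) powr (2/3) \<le> (a * (sqrt s * c2)) powr (2/3)"
    using a b bc by (intro powr_mono2) auto
  also have "\<dots> = (sqrt s) powr (2/3) * (a*c2) powr (2/3)"
    using a s c2 by (simp add: powr_mult mult.left_commute)
  also have "(sqrt s) powr (2/3) = s powr (1/3)"
    using s by (simp add: powr_half_sqrt[symmetric] powr_powr)
  finally have "g^2 \<le> s powr (1/3) * (a*c2) powr (2/3)" using g2 by simp
  then show "t^2 * a^2 + b / t \<le> 2 * (s powr (1/3) * (a*c2) powr (2/3))" using e1 e2 by simp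
qed


theorem mainTheorem7:
  fixes n1 n2 m R :: nat and \<Gamma> s \<gamma> c cU \<delta> \<alpha> \<beta> :: real
    and A :: "real mat \<Rightarrow> real vec" and \<eta> y :: "real vec"
    and uh vh u v :: "nat \<Rightarrow> real vec"
  assumes A: "lin_meas n1 n2 m A"
    and R: "R \<ge> 1" and Gam: "\<Gamma> \<ge> 1" and s: "1 \<le> s" "s \<le> real n2"
    and gam: "\<gamma> > 0" and c: "c \<ge> 1"
    and uh_dim: "\<forall>r<R. uh r \<in> carrier_vec n1" and vh_dim: "\<forall>r<R. vh r \<in> carrier_vec n2"
    and rank: "mrank (factor_mat n1 n2 R uh vh) = R"
    and vh_sparse: "\<forall>r<R. norm1 (vh r) \<le> sqrt s * norm2 (vh r)"
    and Gam_bd: "(\<Sum>r<R. (norm2 (uh r))^2 * (norm2 (vh r))^2) \<le> \<Gamma>^2"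
    and cU: "cU > 0"
    and cU_bd: "(\<Sum>r<R. (norm2 (uh r) * norm2 (vh r)) powr (2/3))
                  \<le> cU * real R powr (2/3) * (schatten (2/3) (factor_mat n1 n2 R uh vh)) powr (2/3)"
    and eta: "\<eta> \<in> carrier_vec m" "\<eta> \<noteq> 0\<^sub>v m"
    and y: "y = A (factor_mat n1 n2 R uh vh) + \<eta>"
    and alpha: "\<alpha> = (norm2 \<eta>)^2 / (schatten (2/3) (factor_mat n1 n2 R uh vh)) powr (2/3)"
    and beta: "\<beta> = \<alpha>" and alpha_lt: "\<alpha> < 1"
    and delta: "0 < \<delta>" "\<delta> < 1"
    and RIP: "sparse_RIP n1 n2 A (2 * R) (real n1)
               (max s (\<gamma>^2 * ((schatten (2/3) (factor_mat n1 n2 R uh vh)) powr (2/3) / (norm2 \<eta>)^2)^2))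
               ((c + 1) * \<Gamma>) \<delta>"
    and u_dim: "\<forall>r<R. u r \<in> carrier_vec n1" and v_dim: "\<forall>r<R. v r \<in> carrier_vec n2"
    and minim: "\<forall>u' v'. (\<forall>r<R. u' r \<in> carrier_vec n1 \<and> v' r \<in> carrier_vec n2) \<longrightarrow>
                  J_fun n1 n2 A y R \<alpha> \<beta> u v \<le> J_fun n1 n2 A y R \<alpha> \<beta> u' v'"
    and sigma_bd: "sqrt (\<Sum>r<R. (norm2 (u r) * norm2 (v r))^2) \<le> c * \<Gamma>"
    and v_lb: "\<forall>r<R. norm2 (v r) \<ge> (frob (factor_mat n1 n2 R uh vh) + norm2 \<eta> + sqrt \<delta>)^2 / \<gamma>"
  shows "frob (factor_mat n1 n2 R uh vh - factor_mat n1 n2 R u v)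
           \<le> (2 * sqrt (cU * real R powr (2/3) * s powr (1/3)) + 2) * norm2 \<eta> + sqrt \<delta>"
proof (cases "n1 = 0")
  case True
  have "0 \<le> cU * real R powr (2/3) * s powr (1/3)" using cU by simp
  then have "0 \<le> (2 * sqrt (cU * real R powr (2/3) * s powr (1/3)) + 2) * norm2 \<eta> + sqrt \<delta>"
    using delta by simp
  then show ?thesis using True by (simp add: frob_def factor_mat_def)
next
  case False
  then have n1: "0 < n1" by simp
  have n2: "0 < n2" using s by simp
  define Xh where "Xh = factor_mat n1 n2 R uh vh"
  define X where "X = factor_mat n1 n2 R u v"
  define S where "S = (schatten (2/3) Xh) powr (2/3)"
  define e where "e = norm2 \<eta>"
  define F where "F = frob Xh"
  define K where "K = cU * real R powr (2/3) * s powr (1/3)"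
  define s2 where "s2 = max s (\<gamma>^2 * (S / e^2)^2)"
  define w where "w = A (Xh - X)"
  have XhC: "Xh \<in> carrier_mat n1 n2" and XC: "X \<in> carrier_mat n1 n2"
    unfolding Xh_def X_def factor_mat_def by auto
  have Acar: "\<And>Z. Z \<in> carrier_mat n1 n2 \<Longrightarrow> A Z \<in> carrier_vec m"
   and Aadd: "\<And>Z W. Z \<in> carrier_mat n1 n2 \<Longrightarrow> W \<in> carrier_mat n1 n2 \<Longrightarrow> A (Z + W) = A Z + A W"
   and Asm: "\<And>Z a. Z \<in> carrier_mat n1 n2 \<Longrightarrow> A (a \<cdot>\<^sub>m Z) = a \<cdot>\<^sub>v A Z"
    using A unfolding lin_meas_def by auto
  have K0: "K \<ge> 0" unfolding K_def using cU by simp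
  have e_pos: "e > 0"
  proof (rule ccontr)
    assume "\<not> e > 0"
    then have "e = 0" unfolding e_def using norm2_nonneg[of \<eta>] by linarith
    then have "\<eta> = 0\<^sub>v m" using eta(1) norm2_zero_comp[of \<eta>] unfolding e_def by (intro eq_vecI) auto
    then show False using eta(2) by simp
  qed
  have S_pos: "S > 0"
  proof (rule ccontr)
    assume "\<not> S > 0"
    moreover have "S \<ge> 0" unfolding S_def by simp
    ultimately have S0: "S = 0" by simp
    have "(\<Sum>r<R. (norm2 (uh r) * norm2 (vh r)) powr (2/3)) \<le> 0"
      using cU_bd S0 unfolding S_def Xh_def by simp
    then have "\<forall>r\<in>{..<R}. (norm2 (uh r) * norm2 (vh r)) powr (2/3) = 0"
      using sum_nonneg_eq_0_iff[of "{..<R}" "\<lambda>r. (norm2 (uh r) * norm2 (vh r)) powr (2/3)"]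
      by (simp add: order_antisym sum_nonneg)
    then have z: "\<And>r. r < R \<Longrightarrow> norm2 (uh r) = 0 \<or> norm2 (vh r) = 0" by auto
    have "Xh = 0\<^sub>m n1 n2"
    proof (rule eq_matI)
      fix i j assume ij: "i < dim_row (0\<^sub>m n1 n2)" "j < dim_col (0\<^sub>m n1 n2)"
      have "\<And>r. r < R \<Longrightarrow> uh r $ i * vh r $ j = 0"
        using z norm2_zero_comp[of "uh _" i] norm2_zero_comp[of "vh _" j] uh_dim vh_dim ij by fastforce
      then have "(\<Sum>r<R. uh r $ i * vh r $ j) = 0" by (intro sum.neutral) auto
      then show "Xh $$ (i, j) = 0\<^sub>m n1 n2 $$ (i, j)" using ij unfolding Xh_def factor_mat_def by simp
    qed (auto simp: Xh_def factor_mat_def)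
    then have "mrank Xh = 0" unfolding mrank_def by (simp add: vec_space.rank_0I)
    then show False using rank R unfolding Xh_def by simp
  qed
  have alpha_eq: "\<alpha> = e^2 / S" unfolding alpha e_def S_def Xh_def ..
  have alpha_pos: "\<alpha> > 0" using alpha_eq S_pos e_pos by simp
  have s2_ge: "s \<le> s2" unfolding s2_def by simp
  have s2_ge2: "\<gamma> * S / e^2 \<le> sqrt s2"
  proof -
    have "\<gamma> * S / e^2 = sqrt (\<gamma>^2 * (S / e^2)^2)"
      using gam S_pos e_pos by (simp add: real_sqrt_mult)
    also have "\<dots> \<le> sqrt s2" unfolding s2_def by (rule real_sqrt_le_mono) simp
    finally show ?thesis .
  qed
  have RIP': "\<And>Z. Z \<in> K_RG n1 n2 (2*R) ((c + 1) * \<Gamma>) (real n1) s2 \<Longrightarrow> \<bar>(norm2 (A Z))^2 - (frob Z)^2\<bar> \<le> \<delta>"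
    using RIP unfolding sparse_RIP_def s2_def S_def e_def Xh_def by blast
  have wC: "w \<in> carrier_vec m" unfolding w_def using Acar[of "Xh - X"] minus_carrier_mat[OF XC, of Xh] by auto
  have yeq: "y - A X = w + \<eta>"
  proof -
    have "Xh = (Xh - X) + X" by (rule eq_matI) (use XhC XC in auto)
    then have AX: "A Xh = w + A X" unfolding w_def using Aadd[of "Xh - X" X] XC by (metis minus_carrier_mat)
    have AXC: "A X \<in> carrier_vec m" using Acar XC by auto
    show ?thesis
    proof (rule eq_vecI)
      show "dim_vec (y - A X) = dim_vec (w + \<eta>)" using AXC eta by simp
      fix i assume "i < dim_vec (w + \<eta>)"
      then have i: "i < m" using eta by simp
      have "A Xh $ i = w $ i + A X $ i" using AX AXC i by simp
      then show "(y - A X) $ i = (w + \<eta>) $ i" using i AXC wC eta unfolding y Xh_def[symmetric] by simp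
    qed
  qed
  have RIPXh: "\<bar>(norm2 (A Xh))^2 - F^2\<bar> \<le> \<delta>"
  proof -
    define ph where "ph r = (if r < R then uh r else 0\<^sub>v n1)" for r
    define qh where "qh r = (if r < R then vh r else 0\<^sub>v n2)" for r
    have meq: "Xh = mat n1 n2 (\<lambda>(i,j). \<Sum>r<2*R. ph r $ i * qh r $ j)"
      unfolding Xh_def factor_mat_def by (rule cong_mat) (auto simp: sum_2R ph_def qh_def)
    have "Xh \<in> K_RG n1 n2 (2*R) ((c + 1) * \<Gamma>) (real n1) s2"
      unfolding meq
    proof (rule factor_KRG[OF n1 n2])
      show "1 \<le> s2" using s s2_ge by simp
      show "\<forall>r<2 * R. ph r \<in> carrier_vec n1" "\<forall>r<2 * R. qh r \<in> carrier_vec n2"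
        using uh_dim vh_dim unfolding ph_def qh_def by auto
      show "\<forall>r<2 * R. norm1 (qh r) \<le> sqrt s2 * norm2 (qh r)"
      proof (intro allI impI)
        fix r assume "r < 2*R"
        show "norm1 (qh r) \<le> sqrt s2 * norm2 (qh r)"
        proof (cases "r < R")
          case True
          have "norm1 (vh r) \<le> sqrt s * norm2 (vh r)" using vh_sparse True by auto
          also have "\<dots> \<le> sqrt s2 * norm2 (vh r)"
            using s2_ge by (intro mult_right_mono real_sqrt_le_mono) auto
          finally show ?thesis using True unfolding qh_def by simp
        qed (simp add: qh_def)
      qed
      have "(\<Sum>r<2*R. (norm2 (ph r) * norm2 (qh r))^2) = (\<Sum>r<R. (norm2 (uh r))^2 * (norm2 (vh r))^2)"
        by (simp add: sum_2R ph_def qh_def power_mult_distrib)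
      then have "sqrt (\<Sum>r<2*R. (norm2 (ph r) * norm2 (qh r))^2) \<le> sqrt (\<Gamma>^2)"
        using Gam_bd by (simp del: real_sqrt_abs)
      also have "\<dots> \<le> (c + 1) * \<Gamma>" using Gam c by simp
      finally show "sqrt (\<Sum>r<2*R. (norm2 (ph r) * norm2 (qh r))^2) \<le> (c + 1) * \<Gamma>" .
    qed
    then show ?thesis using RIP' unfolding F_def by blast
  qed
  have J0: "J_fun n1 n2 A y R \<alpha> \<beta> u v \<le> (F + e + sqrt \<delta>)^2"
  proof -
    have "J_fun n1 n2 A y R \<alpha> \<beta> u v \<le> J_fun n1 n2 A y R \<alpha> \<beta> (\<lambda>_. 0\<^sub>v n1) (\<lambda>_. 0\<^sub>v n2)"
      using minim by auto
    also have "factor_mat n1 n2 R (\<lambda>_. 0\<^sub>v n1) (\<lambda>_. 0\<^sub>v n2) = 0\<^sub>m n1 n2"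
      unfolding factor_mat_def by (rule eq_matI) auto
    moreover have A0: "A (0\<^sub>m n1 n2) = 0\<^sub>v m"
    proof -
      have "A (0\<^sub>m n1 n2) = A (0 \<cdot>\<^sub>m 0\<^sub>m n1 n2)" by (metis smult_zero_mat)
      also have "\<dots> = 0 \<cdot>\<^sub>v A (0\<^sub>m n1 n2)" by (rule Asm) simp
      also have "\<dots> = 0\<^sub>v m" using Acar[of "0\<^sub>m n1 n2"] by (intro eq_vecI) auto
      finally show ?thesis .
    qed
    moreover have yC: "y \<in> carrier_vec m" unfolding y using Acar XhC eta unfolding Xh_def by simp
    ultimately have "J_fun n1 n2 A y R \<alpha> \<beta> u v \<le> (norm2 y)^2"
      unfolding J_fun_def by simp
    moreover have "norm2 y \<le> F + e + sqrt \<delta>"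
    proof -
      have AXhC: "A Xh \<in> carrier_vec m" using Acar XhC by simp
      have "norm2 y \<le> norm2 (A Xh) + e" unfolding e_def
        by (rule norm2_tri[of _ m]) (use AXhC eta yC in \<open>auto simp: y Xh_def\<close>)
      moreover have "norm2 (A Xh) \<le> F + sqrt \<delta>"
      proof -
        have F0: "F \<ge> 0" unfolding F_def frob_def by (simp add: sum_nonneg)
        have "(norm2 (A Xh))^2 \<le> (F + sqrt \<delta>)^2"
        proof -
          have "0 \<le> 2 * F * sqrt \<delta>" using F0 delta by simp
          moreover have "(F + sqrt \<delta>)^2 = F^2 + \<delta> + 2 * F * sqrt \<delta>"
            using delta by (simp add: power2_sum)
          moreover have "(norm2 (A Xh))^2 - F^2 \<le> \<delta>" using RIPXh by (simp add: abs_le_iff)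
          ultimately show ?thesis by linarith
        qed
        then show ?thesis by (rule power2_le_imp_le) (use F0 delta in simp)
      qed
      ultimately show ?thesis by simp
    qed
    then have "(norm2 y)^2 \<le> (F + e + sqrt \<delta>)^2" by (rule power_mono) simp
    ultimately show ?thesis by simp
  qed
  have Jexp: "J_fun n1 n2 A y R \<alpha> \<beta> u v = (norm2 (w + \<eta>))^2 + \<alpha> * (\<Sum>r<R. (norm2 (u r))^2) + \<alpha> * (\<Sum>r<R. norm1 (v r))"
    unfolding J_fun_def beta yeq[unfolded X_def] ..
  have vsp: "\<forall>r<R. norm1 (v r) \<le> sqrt s2 * norm2 (v r)"
  proof (intro allI impI)
    fix r assume r: "r < R"
    have "\<alpha> * norm1 (v r) \<le> \<alpha> * (\<Sum>r<R. norm1 (v r))"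
      using r alpha_pos by (intro mult_left_mono member_le_sum) auto
    also have "\<dots> \<le> J_fun n1 n2 A y R \<alpha> \<beta> u v"
    proof -
      have "0 \<le> \<alpha> * (\<Sum>r<R. (norm2 (u r))^2)" using alpha_pos by (auto intro!: sum_nonneg mult_nonneg_nonneg)
      then show ?thesis unfolding Jexp by simp
    qed
    also have "\<dots> \<le> (F + e + sqrt \<delta>)^2" by (rule J0)
    also have "\<dots> \<le> \<gamma> * norm2 (v r)"
      using v_lb r gam unfolding F_def Xh_def e_def by (auto simp: divide_le_eq mult.commute)
    finally have "\<alpha> * norm1 (v r) \<le> \<gamma> * norm2 (v r)" .
    then have "norm1 (v r) \<le> \<gamma> * norm2 (v r) / \<alpha>" using alpha_pos by (simp add: le_divide_eq mult.commute)
    also have "\<dots> = (\<gamma> * S / e^2) * norm2 (v r)" unfolding alpha_eq using S_pos e_pos by simp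
    also have "\<dots> \<le> sqrt s2 * norm2 (v r)" using s2_ge2 by (intro mult_right_mono) auto
    finally show "norm1 (v r) \<le> sqrt s2 * norm2 (v r)" .
  qed
  have RIPd: "\<bar>(norm2 w)^2 - (frob (Xh - X))^2\<bar> \<le> \<delta>"
  proof -
    define pd where "pd r = (if r < R then uh r else (-1) \<cdot>\<^sub>v u (r - R))" for r
    define qd where "qd r = (if r < R then vh r else v (r - R))" for r
    have neg: "\<And>r i. r < R \<Longrightarrow> i < n1 \<Longrightarrow> ((-1) \<cdot>\<^sub>v u r) $ i = - (u r $ i)"
      using u_dim by auto
    have meq: "Xh - X = mat n1 n2 (\<lambda>(i,j). \<Sum>r<2*R. pd r $ i * qd r $ j)"
    proof (rule eq_matI)
      fix i j assume ij: "i < dim_row (mat n1 n2 (\<lambda>(i,j). \<Sum>r<2*R. pd r $ i * qd r $ j))"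
        "j < dim_col (mat n1 n2 (\<lambda>(i,j). \<Sum>r<2*R. pd r $ i * qd r $ j))"
      then have i: "i < n1" and j: "j < n2" by auto
      have "(\<Sum>r<2*R. pd r $ i * qd r $ j) = (\<Sum>r<R. uh r $ i * vh r $ j) + (\<Sum>r<R. ((-1) \<cdot>\<^sub>v u r) $ i * v r $ j)"
        by (simp add: sum_2R pd_def qd_def)
      also have "(\<Sum>r<R. ((-1) \<cdot>\<^sub>v u r) $ i * v r $ j) = - (\<Sum>r<R. u r $ i * v r $ j)"
        using neg i by (simp add: sum_negf[symmetric])
      finally show "(Xh - X) $$ (i, j) = mat n1 n2 (\<lambda>(i,j). \<Sum>r<2*R. pd r $ i * qd r $ j) $$ (i, j)"
        using i j unfolding Xh_def X_def factor_mat_def by simp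
    qed (auto simp: Xh_def X_def factor_mat_def)
    have "Xh - X \<in> K_RG n1 n2 (2*R) ((c + 1) * \<Gamma>) (real n1) s2"
      unfolding meq
    proof (rule factor_KRG[OF n1 n2])
      show "1 \<le> s2" using s s2_ge by simp
      show "\<forall>r<2 * R. pd r \<in> carrier_vec n1" "\<forall>r<2 * R. qd r \<in> carrier_vec n2"
        using uh_dim vh_dim u_dim v_dim unfolding pd_def qd_def by auto
      show "\<forall>r<2 * R. norm1 (qd r) \<le> sqrt s2 * norm2 (qd r)"
      proof (intro allI impI)
        fix r assume r2: "r < 2*R"
        show "norm1 (qd r) \<le> sqrt s2 * norm2 (qd r)"
        proof (cases "r < R")
          case True
          have "norm1 (vh r) \<le> sqrt s * norm2 (vh r)" using vh_sparse True by auto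
          also have "\<dots> \<le> sqrt s2 * norm2 (vh r)"
            using s2_ge by (intro mult_right_mono real_sqrt_le_mono) auto
          finally show ?thesis using True unfolding qd_def by simp
        next
          case False
          then have "r - R < R" using r2 by simp
          then show ?thesis using vsp False unfolding qd_def by simp
        qed
      qed
      have sb: "(\<Sum>r<R. (norm2 (u r) * norm2 (v r))^2) \<le> (c * \<Gamma>)^2"
      proof -
        have "(\<Sum>r<R. (norm2 (u r) * norm2 (v r))^2) = (sqrt (\<Sum>r<R. (norm2 (u r) * norm2 (v r))^2))^2"
          by (simp add: sum_nonneg)
        also have "\<dots> \<le> (c * \<Gamma>)^2" by (rule power_mono[OF sigma_bd]) (simp add: sum_nonneg)
        finally show ?thesis .
      qed
      have "(\<Sum>r<2*R. (norm2 (pd r) * norm2 (qd r))^2)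
           = (\<Sum>r<R. (norm2 (uh r))^2 * (norm2 (vh r))^2) + (\<Sum>r<R. (norm2 (u r) * norm2 (v r))^2)"
        by (simp add: sum_2R pd_def qd_def power_mult_distrib)
      also have "\<dots> \<le> \<Gamma>^2 + (c * \<Gamma>)^2" using Gam_bd sb by simp
      also have "\<dots> \<le> ((c + 1) * \<Gamma>)^2" using c Gam by (simp add: power2_eq_square algebra_simps)
      finally have "sqrt (\<Sum>r<2*R. (norm2 (pd r) * norm2 (qd r))^2) \<le> sqrt (((c + 1) * \<Gamma>)^2)"
        by (rule real_sqrt_le_mono)
      also have "\<dots> = (c + 1) * \<Gamma>" using c Gam by simp
      finally show "sqrt (\<Sum>r<2*R. (norm2 (pd r) * norm2 (qd r))^2) \<le> (c + 1) * \<Gamma>" .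
    qed
    then show ?thesis using RIP' unfolding w_def by blast
  qed
  have J1: "J_fun n1 n2 A y R \<alpha> \<beta> u v \<le> e^2 + 2 * K * e^2"
  proof -
    define zz where "zz r = (norm2 (uh r) = 0 \<or> norm2 (vh r) = 0)" for r
    define t where "t r = (norm2 (uh r) * norm1 (vh r)) powr (1/3) / norm2 (uh r)" for r
    define u' where "u' r = (if zz r then 0\<^sub>v n1 else t r \<cdot>\<^sub>v uh r)" for r
    define v' where "v' r = (if zz r then 0\<^sub>v n2 else (1 / t r) \<cdot>\<^sub>v vh r)" for r
    have s0: "s > 0" using s by simp
    have bal: "t r > 0 \<and> (t r)^2 * (norm2 (uh r))^2 + norm1 (vh r) / t r
        \<le> 2 * (s powr (1/3) * (norm2 (uh r) * norm2 (vh r)) powr (2/3))"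
      if r: "r < R" and nz: "\<not> zz r" for r
    proof -
      have a: "norm2 (uh r) > 0" "norm2 (vh r) > 0" using nz norm2_nonneg unfolding zz_def
        by (metis less_eq_real_def)+
      have b: "norm1 (vh r) > 0" using a(2) norm2_le_norm1[of "vh r"] by simp
      show ?thesis using balance[OF a(1) b _ s0, of "norm2 (vh r)"] vh_sparse r unfolding t_def by auto
    qed
    have carr: "\<forall>r<R. u' r \<in> carrier_vec n1 \<and> v' r \<in> carrier_vec n2"
      using uh_dim vh_dim unfolding u'_def v'_def by auto
    have fm: "factor_mat n1 n2 R u' v' = Xh"
      unfolding Xh_def factor_mat_def
    proof (rule cong_mat)
      fix i j assume i: "i < n1" and j: "j < n2"
      have "u' r $ i * v' r $ j = uh r $ i * vh r $ j" if r: "r < R" for r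
      proof (cases "zz r")
        case True
        then have "uh r $ i * vh r $ j = 0"
          using norm2_zero_comp[of "uh r" i] norm2_zero_comp[of "vh r" j] uh_dim vh_dim r i j
          unfolding zz_def by auto
        then show ?thesis using True i j unfolding u'_def v'_def by simp
      next
        case False
        then have "t r > 0" using bal r by blast
        moreover have "i < dim_vec (uh r)" "j < dim_vec (vh r)" using i j uh_dim vh_dim r by auto
        ultimately show ?thesis using False unfolding u'_def v'_def by simp
      qed
      then show "(\<lambda>(i, j). \<Sum>r<R. u' r $ i * v' r $ j) (i, j) = (\<lambda>(i, j). \<Sum>r<R. uh r $ i * vh r $ j) (i, j)"
        by (auto intro!: sum.cong)
    qed auto
    have yXh: "y - A Xh = \<eta>"
    proof -
      have AXhC: "A Xh \<in> carrier_vec m" using Acar XhC by simp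
      show ?thesis unfolding y Xh_def[symmetric] by (rule eq_vecI) (use AXhC eta in auto)
    qed
    have per: "(norm2 (u' r))^2 + norm1 (v' r) \<le> 2 * (s powr (1/3) * (norm2 (uh r) * norm2 (vh r)) powr (2/3))"
      if r: "r < R" for r
    proof (cases "zz r")
      case True
      then show ?thesis unfolding u'_def v'_def by simp
    next
      case False
      then have tp: "t r > 0" using bal r by blast
      have "(norm2 (u' r))^2 + norm1 (v' r) = (t r)^2 * (norm2 (uh r))^2 + norm1 (vh r) / t r"
        using False tp unfolding u'_def v'_def by (simp add: power_mult_distrib)
      then show ?thesis using bal[OF r False] by simp
    qed
    have "\<alpha> * (\<Sum>r<R. (norm2 (u' r))^2) + \<alpha> * (\<Sum>r<R. norm1 (v' r))
        = \<alpha> * (\<Sum>r<R. (norm2 (u' r))^2 + norm1 (v' r))"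
      by (simp add: sum.distrib algebra_simps)
    also have "\<dots> \<le> \<alpha> * (\<Sum>r<R. 2 * (s powr (1/3) * (norm2 (uh r) * norm2 (vh r)) powr (2/3)))"
      using per alpha_pos by (intro mult_left_mono sum_mono) auto
    also have "\<dots> = 2 * \<alpha> * s powr (1/3) * (\<Sum>r<R. (norm2 (uh r) * norm2 (vh r)) powr (2/3))"
      by (simp add: sum_distrib_left algebra_simps)
    also have "\<dots> \<le> 2 * \<alpha> * s powr (1/3) * (cU * real R powr (2/3) * S)"
      using cU_bd alpha_pos unfolding S_def Xh_def by (intro mult_left_mono) auto
    also have "\<dots> = 2 * K * (\<alpha> * S)" unfolding K_def by (simp add: algebra_simps)
    also have "\<alpha> * S = e^2" unfolding alpha_eq using S_pos by simp
    finally have pen: "\<alpha> * (\<Sum>r<R. (norm2 (u' r))^2) + \<alpha> * (\<Sum>r<R. norm1 (v' r)) \<le> 2 * K * e^2" .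
    have "J_fun n1 n2 A y R \<alpha> \<beta> u v \<le> J_fun n1 n2 A y R \<alpha> \<beta> u' v'" using minim carr by blast
    also have "\<dots> = e^2 + (\<alpha> * (\<Sum>r<R. (norm2 (u' r))^2) + \<alpha> * (\<Sum>r<R. norm1 (v' r)))"
      unfolding J_fun_def fm yXh beta e_def by simp
    finally show ?thesis using pen by simp
  qed
  have "(norm2 (w + \<eta>))^2 \<le> (1 + 2*K) * e^2"
  proof -
    have "0 \<le> \<alpha> * (\<Sum>r<R. (norm2 (u r))^2)" "0 \<le> \<alpha> * (\<Sum>r<R. norm1 (v r))"
      using alpha_pos by (auto intro!: sum_nonneg mult_nonneg_nonneg)
    then show ?thesis using Jexp J1 by (simp add: algebra_simps)
  qed
  then have h1: "norm2 (w + \<eta>) \<le> sqrt (1 + 2*K) * e"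
  proof -
    have "norm2 (w + \<eta>) \<le> sqrt ((1 + 2*K) * e^2)" using \<open>(norm2 (w + \<eta>))^2 \<le> (1 + 2*K) * e^2\<close>
      by (rule real_le_rsqrt)
    also have "\<dots> = sqrt (1 + 2*K) * e" using e_pos by (simp add: real_sqrt_mult)
    finally show ?thesis .
  qed
  have h2: "norm2 w \<le> norm2 (w + \<eta>) + e"
  proof -
    have "norm2 w \<le> norm2 (w + \<eta>) + norm2 ((-1) \<cdot>\<^sub>v \<eta>)"
      by (rule norm2_tri[of _ m]) (use wC eta in auto)
    then show ?thesis unfolding e_def by simp
  qed
  have h3: "frob (Xh - X) \<le> norm2 w + sqrt \<delta>"
  proof -
    have "(frob (Xh - X))^2 \<le> (norm2 w + sqrt \<delta>)^2"
    proof -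
      have "0 \<le> 2 * norm2 w * sqrt \<delta>" using delta by simp
      moreover have "(norm2 w + sqrt \<delta>)^2 = (norm2 w)^2 + \<delta> + 2 * norm2 w * sqrt \<delta>"
        using delta by (simp add: power2_sum)
      moreover have "(frob (Xh - X))^2 - (norm2 w)^2 \<le> \<delta>" using RIPd by (simp add: abs_le_iff)
      ultimately show ?thesis by linarith
    qed
    then show ?thesis by (rule power2_le_imp_le) (use delta in simp)
  qed
  have h4: "sqrt (1 + 2*K) \<le> 1 + 2 * sqrt K"
  proof -
    have "(sqrt (1 + 2*K))^2 \<le> (1 + 2 * sqrt K)^2"
      using K0 by (simp add: power2_sum power_mult_distrib)
    then show ?thesis by (rule power2_le_imp_le) (use K0 in simp)
  qed
  have "frob (Xh - X) \<le> (sqrt (1 + 2*K) + 1) * e + sqrt \<delta>"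
    using h1 h2 h3 by (simp add: algebra_simps)
  also have "\<dots> \<le> (2 * sqrt K + 2) * e + sqrt \<delta>"
    using h4 e_pos by (intro add_right_mono mult_right_mono) auto
  finally show ?thesis unfolding Xh_def X_def K_def e_def .
qed

end
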